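(* Let $F\in\{\mathbb{R},\mathbb{C}\}$, let $V$ be a vector space over $F$, $I$ an index set, $(W_i)_{i\in I}$ subspaces with direct sum $W=\bigoplus_{i}W_i$, $\mathcal{B}_i$ an $F$-basis of $W_i$, $\mathcal{B}=\bigsqcup_i\mathcal{B}_i$, and $\theta_i:W_i\to F^{(\mathcal{B}_i)}$ the coordinate isomorphism. Let $\varphi,\lambda$ be multiplicative automorphisms of $F$ that commute with complex conjugation and are order preserving on $[0,\infty)$, and let $\rho_b$ ($b\in\mathcal{B}$) be multiplicative automorphisms of $F$. For each $i$, let $\langle-,-\rangle_i$ be an inner product on the vector space $F^{(\mathcal{B}_i)}$ (with its usual operations) over the $F$-like line $(F,+_{\lambda\circ\varphi^{-1}},\cdot)$. Define $\widetilde{\boldsymbol\sigma}_i:W_i\to F^{(\mathcal{B}_i)}$ by $\widetilde{\boldsymbol\sigma}_i(u)=\big(\varphi(\rho_b^{-1}(\theta_i(u)_b))\big)_{b\in\mathcal{B}_i}$, and let $W^{\boldsymbol\eta}$ be $W$ with operations $u\oplus v=\boldsymbol\theta^{-1}(\boldsymbol\theta(u)+_{\boldsymbol\sigma}\boldsymbol\theta(v))$, $\alpha\odot u=\boldsymbol\theta^{-1}(\alpha\cdot_{\boldsymbol\rho}\boldsymbol\theta(u))$, where $\boldsymbol\theta:W\to F^{(\mathcal{B})}$ collects all coordinates, $(x+_{\boldsymbol\sigma}y)_b=(\varphi\rho_b^{-1})^{-1}\big(\varphi\rho_b^{-1}(x_b)+\varphi\rho_b^{-1}(y_b)\big)$ and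 $(\alpha\cdot_{\boldsymbol\rho}x)_b=\rho_b(\alpha)x_b$. For $u=\sum_iu_i$, $v=\sum_iv_i$ with $u_i,v_i\in W_i$, set $$\langle u,v\rangle_{\mathcal I}={}^{\lambda}\!\sum_{i\in I}\varphi^{-1}\big(\langle\widetilde{\boldsymbol\sigma}_i(u_i),\widetilde{\boldsymbol\sigma}_i(v_i)\rangle_i\big),$$ where ${}^{\lambda}\!\sum$ denotes iterated $+_\lambda$ (only finitely many terms are nonzero). Then $\langle-,-\rangle_{\mathcal I}$ is an inner product on $W^{\boldsymbol\eta}$ (a strongly regular near-vector space over $(F,\cdot)$) over the $F$-like line $(F,+_\lambda,\cdot)$.
   Context: A multiplicative automorphism of $F$ is a bijection $\kappa$ with $\kappa(1)=1$, $\kappa(\alpha\beta)=\kappa(\alpha)\kappa(\beta)$; $\alpha+_\kappa\beta:=\kappa^{-1}(\kappa(\alpha)+\kappa(\beta))$, and $(F,+_\kappa,\cdot)$ is a field isomorphic to $F$ via $\kappa^{-1}$ (the $F$-like line). A near-vector space over $(F,\cdot)$: abelian group with free monoid action of $(F,\cdot)$ by endomorphisms ($0\mapsto 0$, $\pm1\mapsto\pm\mathrm{id}$) whose quasi-kernel $Q(V)=\{u\mid\forall\alpha,\beta\,\exists\gamma:\alpha u+\beta u=\gamma u\}$ generates $V$; strongly regular means $Q(V)=V$. An inner product on a strongly regular near-vector space $(X,+_X,\cdot_X)$ over $(F,+_\kappa,\cdot)$ is a map $\langle-,-\rangle:X\times X\to F$ such that for all $\alpha\in F$, $u,v,w\in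 X$: (I1) $\langle u,v\rangle=\kappa^{-1}\big(\overline{\kappa(\langle v,u\rangle)}\big)$; (I2) $\langle\alpha\cdot_Xu,v\rangle=\alpha\langle u,v\rangle$; (I3) $\langle u+_Xv,w\rangle=\langle u,w\rangle+_\kappa\langle v,w\rangle$; (I4) $\langle u,u\rangle\in\kappa^{-1}([0,\infty))$ for $u\neq0$; (I5) $\langle u,u\rangle=0$ iff $u=0$. The coordinate isomorphism $\theta_i$ sends $b\in\mathcal{B}_i$ to $(\delta_{b,c})_{c\in\mathcal{B}_i}$ and extends linearly; $F^{(X)}$ denotes finitely supported families. *)

theory Defs
  imports Complex_Main
begin

text \<open>The scalar field F is modelled as a subset of the complex numbers, namely
  either the reals (\<real>) or all of \<complex> (UNIV).  Complex conjugation is cnj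
  (identity on \<real>); the ray [0,\<infinity>) is the set nonneg_ray.\<close>

definition nonneg_ray :: "complex set" where
  "nonneg_ray = {z. z \<in> \<real> \<and> 0 \<le> Re z}"

definition mult_aut :: "complex set \<Rightarrow> (complex \<Rightarrow> complex) \<Rightarrow> bool" where
  "mult_aut F \<kappa> \<longleftrightarrow> bij_betw \<kappa> F F \<and> \<kappa> 1 = 1 \<and>
     (\<forall>a\<in>F. \<forall>b\<in>F. \<kappa> (a * b) = \<kappa> a * \<kappa> b)"

definition commutes_cnj :: "complex set \<Rightarrow> (complex \<Rightarrow> complex) \<Rightarrow> bool" where
  "commutes_cnj F \<kappa> \<longleftrightarrow> (\<forall>x\<in>F. \<kappa> (cnj x) = cnj (\<kappa> x))"

definition order_pres_nonneg :: "(complex \<Rightarrow> complex) \<Rightarrow> bool" where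
  "order_pres_nonneg \<kappa> \<longleftrightarrow>
     (\<forall>x\<in>nonneg_ray. \<forall>y\<in>nonneg_ray. Re x \<le> Re y \<longrightarrow> Re (\<kappa> x) \<le> Re (\<kappa> y))"

text \<open>Inner product (I1)-(I5) on a structure X (carrier X, addition addX, scalar action
  smulX, zero zX) over the F-like line (F, +_\<kappa>, \<cdot>).\<close>

definition is_inner_product ::
  "complex set \<Rightarrow> (complex \<Rightarrow> complex) \<Rightarrow> 'x set \<Rightarrow> ('x \<Rightarrow> 'x \<Rightarrow> 'x) \<Rightarrow>
   (complex \<Rightarrow> 'x \<Rightarrow> 'x) \<Rightarrow> 'x \<Rightarrow> ('x \<Rightarrow> 'x \<Rightarrow> complex) \<Rightarrow> bool" where
  "is_inner_product F \<kappa> X addX smulX zX ip \<longleftrightarrow>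
     (\<forall>u\<in>X. \<forall>v\<in>X. ip u v \<in> F) \<and>
     (\<forall>u\<in>X. \<forall>v\<in>X. ip u v = inv_into F \<kappa> (cnj (\<kappa> (ip v u)))) \<and>
     (\<forall>\<alpha>\<in>F. \<forall>u\<in>X. \<forall>v\<in>X. ip (smulX \<alpha> u) v = \<alpha> * ip u v) \<and>
     (\<forall>u\<in>X. \<forall>v\<in>X. \<forall>w\<in>X.
        ip (addX u v) w = inv_into F \<kappa> (\<kappa> (ip u w) + \<kappa> (ip v w))) \<and>
     (\<forall>u\<in>X. u \<noteq> zX \<longrightarrow> ip u u \<in> {x\<in>F. \<kappa> x \<in> nonneg_ray}) \<and>
     (\<forall>u\<in>X. ip u u = 0 \<longleftrightarrow> u = zX)"

text \<open>Vector spaces over F: an abelian group with a scalar multiplication by complex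
  numbers whose axioms are only required for scalars in F.\<close>

definition f_vector_space :: "complex set \<Rightarrow> (complex \<Rightarrow> 'v::ab_group_add \<Rightarrow> 'v) \<Rightarrow> bool" where
  "f_vector_space F sc \<longleftrightarrow>
     (\<forall>a\<in>F. \<forall>x y. sc a (x + y) = sc a x + sc a y) \<and>
     (\<forall>a\<in>F. \<forall>b\<in>F. \<forall>x. sc (a + b) x = sc a x + sc b x) \<and>
     (\<forall>a\<in>F. \<forall>b\<in>F. \<forall>x. sc a (sc b x) = sc (a * b) x) \<and>
     (\<forall>x. sc 1 x = x)"

definition f_subspace :: "complex set \<Rightarrow> (complex \<Rightarrow> 'v::ab_group_add \<Rightarrow> 'v) \<Rightarrow> 'v set \<Rightarrow> bool" where
  "f_subspace F sc S \<longleftrightarrow> 0 \<in> S \<and> (\<forall>x\<in>S. \<forall>y\<in>S. x + y \<in> S) \<and> (\<forall>a\<in>F. \<forall>x\<in>S. sc a x \<in> S)"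

definition f_span :: "complex set \<Rightarrow> (complex \<Rightarrow> 'v::ab_group_add \<Rightarrow> 'v) \<Rightarrow> 'v set \<Rightarrow> 'v set" where
  "f_span F sc S = {\<Sum>x\<in>T. sc (c x) x | T c. finite T \<and> T \<subseteq> S \<and> (\<forall>x\<in>T. c x \<in> F)}"

definition f_independent :: "complex set \<Rightarrow> (complex \<Rightarrow> 'v::ab_group_add \<Rightarrow> 'v) \<Rightarrow> 'v set \<Rightarrow> bool" where
  "f_independent F sc S \<longleftrightarrow>
     (\<forall>T c. finite T \<longrightarrow> T \<subseteq> S \<longrightarrow> (\<forall>x\<in>T. c x \<in> F) \<longrightarrow>
        (\<Sum>x\<in>T. sc (c x) x) = 0 \<longrightarrow> (\<forall>x\<in>T. c x = 0))"

definition f_basis :: "complex set \<Rightarrow> (complex \<Rightarrow> 'v::ab_group_add \<Rightarrow> 'v) \<Rightarrow> 'v set \<Rightarrow> 'v set \<Rightarrow> bool" where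
  "f_basis F sc Wi Bi \<longleftrightarrow> Bi \<subseteq> Wi \<and> f_independent F sc Bi \<and> f_span F sc Bi = Wi"

definition independent_family :: "'i set \<Rightarrow> ('i \<Rightarrow> 'v::ab_group_add set) \<Rightarrow> bool" where
  "independent_family I W \<longleftrightarrow>
     (\<forall>J w. finite J \<longrightarrow> J \<subseteq> I \<longrightarrow> (\<forall>i\<in>J. w i \<in> W i) \<longrightarrow> sum w J = 0 \<longrightarrow> (\<forall>i\<in>J. w i = 0))"

definition sum_of_family :: "'i set \<Rightarrow> ('i \<Rightarrow> 'v::ab_group_add set) \<Rightarrow> 'v set" where
  "sum_of_family I W = {sum w J | J w. finite J \<and> J \<subseteq> I \<and> (\<forall>i\<in>J. w i \<in> W i)}"

definition component :: "'i set \<Rightarrow> ('i \<Rightarrow> 'v::ab_group_add set) \<Rightarrow> 'v \<Rightarrow> 'i \<Rightarrow> 'v" where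
  "component I W u = (THE w. (\<forall>i\<in>I. w i \<in> W i) \<and> (\<forall>i. i \<notin> I \<longrightarrow> w i = 0) \<and>
      finite {i\<in>I. w i \<noteq> 0} \<and> u = (\<Sum>i\<in>{i\<in>I. w i \<noteq> 0}. w i))"

text \<open>Finitely supported families F^(S), represented as functions vanishing outside S.\<close>

definition fin_fam :: "complex set \<Rightarrow> 'b set \<Rightarrow> ('b \<Rightarrow> complex) set" where
  "fin_fam F S = {c. (\<forall>b. c b \<in> F) \<and> (\<forall>b. b \<notin> S \<longrightarrow> c b = 0) \<and> finite {b. c b \<noteq> 0}}"

definition fam_add :: "('b \<Rightarrow> complex) \<Rightarrow> ('b \<Rightarrow> complex) \<Rightarrow> ('b \<Rightarrow> complex)" where
  "fam_add x y = (\<lambda>b. x b + y b)"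

definition fam_smul :: "complex \<Rightarrow> ('b \<Rightarrow> complex) \<Rightarrow> ('b \<Rightarrow> complex)" where
  "fam_smul a x = (\<lambda>b. a * x b)"

definition coords_inv :: "(complex \<Rightarrow> 'v::ab_group_add \<Rightarrow> 'v) \<Rightarrow> ('v \<Rightarrow> complex) \<Rightarrow> 'v" where
  "coords_inv sc c = (\<Sum>b\<in>{b. c b \<noteq> 0}. sc (c b) b)"

definition coords :: "complex set \<Rightarrow> (complex \<Rightarrow> 'v::ab_group_add \<Rightarrow> 'v) \<Rightarrow> 'v set \<Rightarrow> 'v \<Rightarrow> ('v \<Rightarrow> complex)" where
  "coords F sc S u = (THE c. c \<in> fin_fam F S \<and> u = coords_inv sc c)"

definition eta_add ::
  "complex set \<Rightarrow> (complex \<Rightarrow> 'v::ab_group_add \<Rightarrow> 'v) \<Rightarrow> 'v set \<Rightarrow> (complex \<Rightarrow> complex) \<Rightarrow>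
   ('v \<Rightarrow> complex \<Rightarrow> complex) \<Rightarrow> 'v \<Rightarrow> 'v \<Rightarrow> 'v" where
  "eta_add F sc BB \<phi> \<rho> u v = coords_inv sc (\<lambda>b. if b \<in> BB then
      \<rho> b (inv_into F \<phi> (\<phi> (inv_into F (\<rho> b) (coords F sc BB u b))
                        + \<phi> (inv_into F (\<rho> b) (coords F sc BB v b))))
      else 0)"

definition eta_smul ::
  "complex set \<Rightarrow> (complex \<Rightarrow> 'v::ab_group_add \<Rightarrow> 'v) \<Rightarrow> 'v set \<Rightarrow>
   ('v \<Rightarrow> complex \<Rightarrow> complex) \<Rightarrow> complex \<Rightarrow> 'v \<Rightarrow> 'v" where
  "eta_smul F sc BB \<rho> a u = coords_inv sc (\<lambda>b. if b \<in> BB then \<rho> b a * coords F sc BB u b else 0)"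

definition sigma_tilde ::
  "complex set \<Rightarrow> (complex \<Rightarrow> 'v::ab_group_add \<Rightarrow> 'v) \<Rightarrow> 'v set \<Rightarrow> (complex \<Rightarrow> complex) \<Rightarrow>
   ('v \<Rightarrow> complex \<Rightarrow> complex) \<Rightarrow> 'v \<Rightarrow> ('v \<Rightarrow> complex)" where
  "sigma_tilde F sc Bi \<phi> \<rho> u =
     (\<lambda>b. if b \<in> Bi then \<phi> (inv_into F (\<rho> b) (coords F sc Bi u b)) else 0)"

definition lambda_sum :: "complex set \<Rightarrow> (complex \<Rightarrow> complex) \<Rightarrow> 'i set \<Rightarrow> ('i \<Rightarrow> complex) \<Rightarrow> complex" where
  "lambda_sum F lam I t = inv_into F lam (\<Sum>i\<in>{i\<in>I. t i \<noteq> 0}. lam (t i))"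

definition ip_I ::
  "complex set \<Rightarrow> (complex \<Rightarrow> 'v::ab_group_add \<Rightarrow> 'v) \<Rightarrow> 'i set \<Rightarrow> ('i \<Rightarrow> 'v set) \<Rightarrow> ('i \<Rightarrow> 'v set) \<Rightarrow>
   (complex \<Rightarrow> complex) \<Rightarrow> (complex \<Rightarrow> complex) \<Rightarrow> ('v \<Rightarrow> complex \<Rightarrow> complex) \<Rightarrow>
   ('i \<Rightarrow> ('v \<Rightarrow> complex) \<Rightarrow> ('v \<Rightarrow> complex) \<Rightarrow> complex) \<Rightarrow> 'v \<Rightarrow> 'v \<Rightarrow> complex" where
  "ip_I F sc I W B \<phi> lam \<rho> ip u v = lambda_sum F lam I (\<lambda>i.
      inv_into F \<phi> (ip i (sigma_tilde F sc (B i) \<phi> \<rho> (component I W u i))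
                          (sigma_tilde F sc (B i) \<phi> \<rho> (component I W v i))))"

end

theory Submission
  imports Defs
begin



definition Fset :: "complex set \<Rightarrow> bool" where
  "Fset F \<longleftrightarrow> F = \<real> \<or> F = UNIV"

lemma Fset_props:
  assumes "Fset F"
  shows "0 \<in> F" "1 \<in> F" "x \<in> F \<Longrightarrow> y \<in> F \<Longrightarrow> x + y \<in> F"
    "x \<in> F \<Longrightarrow> y \<in> F \<Longrightarrow> x * y \<in> F" "x \<in> F \<Longrightarrow> -x \<in> F"
    "x \<in> F \<Longrightarrow> y \<in> F \<Longrightarrow> x - y \<in> F" "x \<in> F \<Longrightarrow> cnj x \<in> F"
    "x \<in> nonneg_ray \<Longrightarrow> x \<in> F" "-1 \<in> F"
  using assms unfolding Fset_def nonneg_ray_def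
  by (auto simp: Reals_cnj_iff)

lemma Fset_sum:
  assumes "Fset F" "\<forall>x\<in>A. f x \<in> F" shows "sum f A \<in> F"
  using assms(2)
  by (induction A rule: infinite_finite_induct) (auto simp: Fset_props[OF assms(1)])

lemma ma_bij: "mult_aut F k \<Longrightarrow> bij_betw k F F" by (simp add: mult_aut_def)

lemma ma_in: "mult_aut F k \<Longrightarrow> x \<in> F \<Longrightarrow> k x \<in> F"
  by (meson bij_betw_apply ma_bij)

lemma ma_inv_in: "mult_aut F k \<Longrightarrow> x \<in> F \<Longrightarrow> inv_into F k x \<in> F"
  by (meson bij_betw_apply bij_betw_inv_into ma_bij)

lemma ma_inv_f: "mult_aut F k \<Longrightarrow> x \<in> F \<Longrightarrow> inv_into F k (k x) = x"
  by (meson bij_betw_inv_into_left ma_bij)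

lemma ma_f_inv: "mult_aut F k \<Longrightarrow> x \<in> F \<Longrightarrow> k (inv_into F k x) = x"
  by (meson bij_betw_inv_into_right ma_bij)

lemma ma_mult: "mult_aut F k \<Longrightarrow> x \<in> F \<Longrightarrow> y \<in> F \<Longrightarrow> k (x * y) = k x * k y"
  by (simp add: mult_aut_def)

lemma ma_zero:
  assumes "Fset F" "mult_aut F k" shows "k 0 = 0"
proof -
  have "k 0 = k 0 * k 0" using ma_mult[OF assms(2), of 0 0] Fset_props[OF assms(1)] by simp
  hence "k 0 = 0 \<or> k 0 = 1" by (metis mult_cancel_right1)
  moreover have "k 0 \<noteq> 1"
  proof
    assume "k 0 = 1"
    hence "k 0 = k 1" using assms(2) by (simp add: mult_aut_def)
    hence "inv_into F k (k 0) = inv_into F k (k 1)" by simp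
    thus False using ma_inv_f[OF assms(2)] Fset_props[OF assms(1)] by simp
  qed
  ultimately show ?thesis by blast
qed

lemma ma_eq0: "Fset F \<Longrightarrow> mult_aut F k \<Longrightarrow> x \<in> F \<Longrightarrow> k x = 0 \<longleftrightarrow> x = 0"
  by (metis ma_inv_f ma_zero Fset_props(1))

lemma ma_inv_zero: "Fset F \<Longrightarrow> mult_aut F k \<Longrightarrow> inv_into F k 0 = 0"
  by (metis ma_inv_f ma_zero Fset_props(1))

lemma ma_inv_mult:
  assumes "mult_aut F k" "x \<in> F" "y \<in> F" "Fset F"
  shows "inv_into F k (x * y) = inv_into F k x * inv_into F k y"
proof -
  have "x * y = k (inv_into F k x * inv_into F k y)"
    using assms by (simp add: ma_mult ma_inv_in ma_f_inv)
  thus ?thesis using assms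
    by (simp add: ma_inv_f ma_inv_in Fset_props)
qed




definition restr :: "('b \<Rightarrow> complex) \<Rightarrow> 'b set \<Rightarrow> 'b \<Rightarrow> complex" where
  "restr c S = (\<lambda>b. if b \<in> S then c b else 0)"

locale setting =
  fixes F :: "complex set"
    and sc :: "complex \<Rightarrow> 'v::ab_group_add \<Rightarrow> 'v"
    and I :: "'i set"
    and W B :: "'i \<Rightarrow> 'v set"
  assumes FF: "Fset F"
    and V: "f_vector_space F sc"
    and Wsub: "\<forall>i\<in>I. f_subspace F sc (W i)"
    and direct: "independent_family I W"
    and basis: "\<forall>i\<in>I. f_basis F sc (W i) (B i)"
begin

lemmas Fp = Fset_props[OF FF]

definition "BB = (\<Union>i\<in>I. B i)"
definition "X = sum_of_family I W"
definition "idx b = (SOME i. i \<in> I \<and> b \<in> B i)"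

lemma sc_add_left: "a \<in> F \<Longrightarrow> b \<in> F \<Longrightarrow> sc (a + b) x = sc a x + sc b x"
  using V by (simp add: f_vector_space_def)
lemma sc_add_right: "a \<in> F \<Longrightarrow> sc a (x + y) = sc a x + sc a y"
  using V by (simp add: f_vector_space_def)
lemma sc_one: "sc 1 x = x"
  using V by (simp add: f_vector_space_def)

lemma sc_zero_left[simp]: "sc 0 x = 0"
  using sc_add_left[of 0 0 x] Fp by simp

lemma sc_diff: "a \<in> F \<Longrightarrow> b \<in> F \<Longrightarrow> sc (a - b) x = sc a x - sc b x"
  using sc_add_left[of "a - b" b x] Fp by (simp add: eq_diff_eq)

lemma sc_neg: "sc (-1) x = - x"
  using sc_diff[of 0 1 x] Fp sc_one by simp

lemma W_neg: "i \<in> I \<Longrightarrow> x \<in> W i \<Longrightarrow> - x \<in> W i"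
  using Wsub Fp sc_neg unfolding f_subspace_def by metis

lemma W_diff: "i \<in> I \<Longrightarrow> x \<in> W i \<Longrightarrow> y \<in> W i \<Longrightarrow> x - y \<in> W i"
  using Wsub W_neg unfolding f_subspace_def by (metis diff_conv_add_uminus)

lemma indep_B: "i \<in> I \<Longrightarrow> f_independent F sc (B i)"
  using basis by (simp add: f_basis_def)
lemma span_B: "i \<in> I \<Longrightarrow> f_span F sc (B i) = W i"
  using basis by (simp add: f_basis_def)
lemma B_sub: "i \<in> I \<Longrightarrow> B i \<subseteq> W i"
  using basis by (simp add: f_basis_def)

lemma indepD: "f_independent F sc S \<Longrightarrow> finite T \<Longrightarrow> T \<subseteq> S \<Longrightarrow> \<forall>x\<in>T. c x \<in> F
   \<Longrightarrow> (\<Sum>x\<in>T. sc (c x) x) = 0 \<Longrightarrow> x \<in> T \<Longrightarrow> c x = 0"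
  unfolding f_independent_def by blast

lemma directD: "finite J \<Longrightarrow> J \<subseteq> I \<Longrightarrow> \<forall>i\<in>J. w i \<in> W i \<Longrightarrow> sum w J = 0 \<Longrightarrow> i \<in> J \<Longrightarrow> w i = 0"
  using direct unfolding independent_family_def by blast

lemma zero_notin_B: "i \<in> I \<Longrightarrow> 0 \<notin> B i"
proof
  assume i: "i \<in> I" "0 \<in> B i"
  have "sc 1 0 = 0" using sc_one by simp
  hence "(\<lambda>_. 1::complex) 0 = 0"
    using indepD[OF indep_B[OF i(1)], of "{0}" "\<lambda>_. 1" 0] i Fp by simp
  thus False by simp
qed

lemma disj: assumes "i \<in> I" "j \<in> I" "b \<in> B i" "b \<in> B j" shows "i = j"
proof (rule ccontr)
  assume ne: "i \<noteq> j"
  define w where "w = (\<lambda>k. if k = i then b else - b)"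
  have "w i \<in> W i" using assms B_sub w_def by auto
  moreover have "w j \<in> W j" using assms B_sub w_def ne W_neg by auto
  moreover have "sum w {i, j} = 0" using ne by (simp add: w_def)
  ultimately have "w i = 0" using directD[of "{i,j}" w i] assms by simp
  thus False using zero_notin_B assms by (simp add: w_def)
qed

lemma idx: "b \<in> BB \<Longrightarrow> idx b \<in> I \<and> b \<in> B (idx b)"
  unfolding BB_def idx_def by (rule someI_ex) auto

lemma idx_eq: "i \<in> I \<Longrightarrow> b \<in> B i \<Longrightarrow> idx b = i"
  using idx disj unfolding BB_def by blast

lemma sum_in_span: "finite T \<Longrightarrow> T \<subseteq> S \<Longrightarrow> \<forall>x\<in>T. c x \<in> F \<Longrightarrow> (\<Sum>x\<in>T. sc (c x) x) \<in> f_span F sc S"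
  unfolding f_span_def by blast

lemma indep_BB: "f_independent F sc BB"
  unfolding f_independent_def
proof (intro allI impI)
  fix T c assume T: "finite T" "T \<subseteq> BB" "\<forall>x\<in>T. c x \<in> F" "(\<Sum>x\<in>T. sc (c x) x) = 0"
  define w where "w i = (\<Sum>x\<in>{x\<in>T. idx x = i}. sc (c x) x)" for i
  have J: "finite (idx ` T)" "idx ` T \<subseteq> I" using T idx by auto
  have "sum w (idx ` T) = 0" unfolding w_def using sum.group[OF T(1) J(1) subset_refl, of "\<lambda>x. sc (c x) x"] T(4) by simp
  moreover have "\<forall>i\<in>idx ` T. w i \<in> W i"
  proof
    fix i assume i: "i \<in> idx ` T"
    have "{x\<in>T. idx x = i} \<subseteq> B i" using T(2) idx by auto
    then show "w i \<in> W i" unfolding w_def using span_B[of i] J i T sum_in_span[of "{x\<in>T. idx x = i}" "B i" c]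
      by auto
  qed
  ultimately have w0: "\<forall>i\<in>idx ` T. w i = 0" using direct J unfolding independent_family_def by blast
  show "\<forall>x\<in>T. c x = 0"
  proof
    fix x assume x: "x \<in> T"
    let ?i = "idx x"
    have "{y\<in>T. idx y = ?i} \<subseteq> B ?i"
    proof
      fix y assume "y \<in> {y\<in>T. idx y = ?i}"
      then show "y \<in> B ?i" using T(2) idx by (metis (mono_tags) mem_Collect_eq subsetD)
    qed
    moreover have "w ?i = 0" using w0 x by auto
    ultimately show "c x = 0" using indepD[OF indep_B[of ?i], of "{y\<in>T. idx y = ?i}" c x] idx[of x] x T
      unfolding w_def by auto
  qed
qed

lemma ci_superset:
  assumes "finite T" "{b. c b \<noteq> 0} \<subseteq> T"
  shows "coords_inv sc c = (\<Sum>b\<in>T. sc (c b) b)"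
  unfolding coords_inv_def
  by (rule sum.mono_neutral_left) (use assms in auto)

lemma ci_zero: "coords_inv sc (\<lambda>_. 0) = 0"
  by (simp add: coords_inv_def)

lemma fin_fam_iff: "c \<in> fin_fam F S \<longleftrightarrow> (\<forall>b. c b \<in> F) \<and> (\<forall>b. b \<notin> S \<longrightarrow> c b = 0) \<and> finite {b. c b \<noteq> 0}"
  by (simp add: fin_fam_def)

lemma ci_add:
  assumes "c \<in> fin_fam F S" "d \<in> fin_fam F S"
  shows "coords_inv sc (\<lambda>b. c b + d b) = coords_inv sc c + coords_inv sc d"
proof -
  let ?T = "{b. c b \<noteq> 0} \<union> {b. d b \<noteq> 0}"
  have f: "finite ?T" using assms by (simp add: fin_fam_iff)
  have "coords_inv sc (\<lambda>b. c b + d b) = (\<Sum>b\<in>?T. sc (c b + d b) b)"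
    by (rule ci_superset[OF f]) auto
  also have "\<dots> = (\<Sum>b\<in>?T. sc (c b) b) + (\<Sum>b\<in>?T. sc (d b) b)"
    using assms by (simp add: fin_fam_iff sc_add_left sum.distrib)
  also have "\<dots> = coords_inv sc c + coords_inv sc d"
    using ci_superset[OF f, of c] ci_superset[OF f, of d] by auto
  finally show ?thesis .
qed

lemma coords_unique:
  assumes ind: "f_independent F sc S" and c: "c \<in> fin_fam F S" and d: "d \<in> fin_fam F S"
    and eq: "coords_inv sc c = coords_inv sc d"
  shows "c = d"
proof -
  let ?T = "{b. c b \<noteq> 0} \<union> {b. d b \<noteq> 0}"
  have f: "finite ?T" using c d by (simp add: fin_fam_iff)
  have sub: "?T \<subseteq> S" using c d by (auto simp: fin_fam_iff)
  have "(\<Sum>b\<in>?T. sc (c b - d b) b) = (\<Sum>b\<in>?T. sc (c b) b) - (\<Sum>b\<in>?T. sc (d b) b)"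
    using c d by (simp add: fin_fam_iff sc_diff sum_subtractf)
  also have "\<dots> = 0"
    using ci_superset[OF f, of c] ci_superset[OF f, of d] eq by auto
  finally have eq0: "(\<Sum>b\<in>?T. sc (c b - d b) b) = 0" .
  have inF: "\<forall>b\<in>?T. c b - d b \<in> F" using c d Fp by (simp add: fin_fam_iff)
  have "\<forall>b\<in>?T. c b - d b = 0"
  proof
    fix b assume "b \<in> ?T"
    show "c b - d b = 0" using indepD[OF ind f sub inF eq0 \<open>b \<in> ?T\<close>] by simp
  qed
  note z = this
  show ?thesis
  proof (rule ext)
    fix b show "c b = d b"
    proof (cases "b \<in> ?T")
      case True with z have "c b - d b = 0" by blast
      thus ?thesis by simp
    next
      case False thus ?thesis by simp
    qed
  qed
qed

lemma coords_of_inv: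
  assumes ind: "f_independent F sc S" and c: "c \<in> fin_fam F S"
  shows "coords F sc S (coords_inv sc c) = c"
  unfolding coords_def
proof (rule the_equality)
  show "c \<in> fin_fam F S \<and> coords_inv sc c = coords_inv sc c" using c by simp
next
  fix x assume x: "x \<in> fin_fam F S \<and> coords_inv sc c = coords_inv sc x"
  show "x = c" using coords_unique[OF ind _ c, of x] x by simp
qed

lemma ci_in_span: "c \<in> fin_fam F S \<Longrightarrow> coords_inv sc c \<in> f_span F sc S"
  unfolding coords_inv_def by (rule sum_in_span) (auto simp: fin_fam_iff)

lemma span_rep:
  assumes "i \<in> I" "u \<in> W i" shows "\<exists>c\<in>fin_fam F (B i). u = coords_inv sc c"
proof -
  obtain T c where T: "u = (\<Sum>x\<in>T. sc (c x) x)" "finite T" "T \<subseteq> B i" "\<forall>x\<in>T. c x \<in> F"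
    using assms span_B unfolding f_span_def by blast
  define c' where "c' b = (if b \<in> T then c b else 0)" for b
  have "c' \<in> fin_fam F (B i)" using T Fp unfolding fin_fam_iff c'_def
    by (auto intro: finite_subset[OF _ T(2)])
  moreover have "coords_inv sc c' = u"
  proof -
    have "{b. c' b \<noteq> 0} \<subseteq> T" by (auto simp: c'_def)
    hence "coords_inv sc c' = (\<Sum>b\<in>T. sc (c' b) b)" using ci_superset[OF T(2)] by blast
    also have "\<dots> = (\<Sum>b\<in>T. sc (c b) b)" by (simp add: c'_def)
    finally show ?thesis using T(1) by simp
  qed
  ultimately show ?thesis by auto
qed

lemma restr_in: "c \<in> fin_fam F BB \<Longrightarrow> restr c S \<in> fin_fam F S"
  unfolding fin_fam_iff restr_def using Fp
  by (auto elim: finite_subset[rotated])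

lemma restr_in_BB: "c \<in> fin_fam F BB \<Longrightarrow> i \<in> I \<Longrightarrow> restr c (B i) \<in> fin_fam F BB"
  unfolding fin_fam_iff restr_def BB_def using Fp
  by (auto elim: finite_subset[rotated])

lemma fin_fam_B_BB: "i \<in> I \<Longrightarrow> c \<in> fin_fam F (B i) \<Longrightarrow> c \<in> fin_fam F BB"
  unfolding fin_fam_iff BB_def by auto

lemma decomp:
  assumes c: "c \<in> fin_fam F BB"
  shows "coords_inv sc c = (\<Sum>i\<in>idx ` {b. c b \<noteq> 0}. coords_inv sc (restr c (B i)))"
proof -
  let ?S = "{b. c b \<noteq> 0}"
  have fS: "finite ?S" and SB: "?S \<subseteq> BB" using c by (auto simp: fin_fam_iff)
  have "coords_inv sc c = (\<Sum>b\<in>?S. sc (c b) b)" by (simp add: coords_inv_def)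
  also have "\<dots> = (\<Sum>i\<in>idx ` ?S. \<Sum>b\<in>{b\<in>?S. idx b = i}. sc (c b) b)"
    by (rule sum.group[OF fS finite_imageI[OF fS] subset_refl, symmetric])
  also have "\<dots> = (\<Sum>i\<in>idx ` ?S. coords_inv sc (restr c (B i)))"
  proof (rule sum.cong[OF refl])
    fix i assume i: "i \<in> idx ` ?S"
    hence iI: "i \<in> I" using SB idx by auto
    have sub: "{b. restr c (B i) b \<noteq> 0} \<subseteq> {b\<in>?S. idx b = i}"
      using idx_eq[OF iI] by (auto simp: restr_def)
    have "coords_inv sc (restr c (B i)) = (\<Sum>b\<in>{b\<in>?S. idx b = i}. sc (restr c (B i) b) b)"
      by (rule ci_superset[OF _ sub]) (use fS in auto)
    also have "\<dots> = (\<Sum>b\<in>{b\<in>?S. idx b = i}. sc (c b) b)"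
      by (rule sum.cong[OF refl]) (use SB idx in \<open>auto simp: restr_def\<close>)
    finally show "(\<Sum>b\<in>{b\<in>?S. idx b = i}. sc (c b) b) = coords_inv sc (restr c (B i))" by simp
  qed
  finally show ?thesis .
qed

end



context setting begin

lemma supp_idx: "c \<in> fin_fam F BB \<Longrightarrow> i \<in> I \<Longrightarrow> restr c (B i) \<noteq> (\<lambda>_. 0) \<Longrightarrow> i \<in> idx ` {b. c b \<noteq> 0}"
proof -
  assume c: "c \<in> fin_fam F BB" and i: "i \<in> I" and ne: "restr c (B i) \<noteq> (\<lambda>_. 0)"
  then obtain b where "b \<in> B i" "c b \<noteq> 0" by (auto simp: restr_def fun_eq_iff split: if_splits)
  thus ?thesis using idx_eq[OF i] by force
qed

lemma idx_img: "c \<in> fin_fam F BB \<Longrightarrow> finite (idx ` {b. c b \<noteq> 0}) \<and> idx ` {b. c b \<noteq> 0} \<subseteq> I"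
  using idx by (auto simp: fin_fam_iff)

lemma ci_restr_W: "c \<in> fin_fam F BB \<Longrightarrow> i \<in> I \<Longrightarrow> coords_inv sc (restr c (B i)) \<in> W i"
  using ci_in_span[OF restr_in] span_B by auto

lemma ci_in_X: assumes c: "c \<in> fin_fam F BB" shows "coords_inv sc c \<in> X"
  unfolding X_def sum_of_family_def
  using decomp[OF c] idx_img[OF c] ci_restr_W[OF c] by blast

lemma X_rep_aux: "finite J \<Longrightarrow> J \<subseteq> I \<Longrightarrow> \<forall>i\<in>J. w i \<in> W i \<Longrightarrow> \<exists>c\<in>fin_fam F BB. sum w J = coords_inv sc c"
proof (induction J rule: finite_induct)
  case empty
  have "(\<lambda>_. 0) \<in> fin_fam F BB" using Fp by (simp add: fin_fam_iff)
  then show ?case using ci_zero by force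
next
  case (insert x J)
  obtain c2 where c2: "c2 \<in> fin_fam F BB" "sum w J = coords_inv sc c2" using insert by auto
  obtain c1 where c1: "c1 \<in> fin_fam F (B x)" "w x = coords_inv sc c1" using insert span_rep by blast
  have c1': "c1 \<in> fin_fam F BB" using fin_fam_B_BB c1 insert by auto
  have "(\<lambda>b. c1 b + c2 b) \<in> fin_fam F BB" using c1' c2 Fp
    by (auto simp: fin_fam_iff intro: finite_subset[of _ "{b. c1 b \<noteq> 0} \<union> {b. c2 b \<noteq> 0}"])
  moreover have "sum w (insert x J) = coords_inv sc (\<lambda>b. c1 b + c2 b)"
    using insert c1 c2 ci_add[OF c1' c2(1)] by simp
  ultimately show ?case by blast
qed

lemma X_rep: "u \<in> X \<Longrightarrow> \<exists>c\<in>fin_fam F BB. u = coords_inv sc c"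
  unfolding X_def sum_of_family_def using X_rep_aux by blast

lemma coords_X: assumes "u \<in> X"
  shows "coords F sc BB u \<in> fin_fam F BB" "coords_inv sc (coords F sc BB u) = u"
  using X_rep[OF assms] coords_of_inv[OF indep_BB] by auto

definition "compP u w \<longleftrightarrow> (\<forall>i\<in>I. w i \<in> W i) \<and> (\<forall>i. i \<notin> I \<longrightarrow> w i = 0) \<and>
      finite {i\<in>I. w i \<noteq> 0} \<and> u = (\<Sum>i\<in>{i\<in>I. w i \<noteq> 0}. w i)"

lemma compP_unique: assumes "compP u w" "compP u w'" shows "w = w'"
proof (rule ext)
  fix i
  let ?J = "{i\<in>I. w i \<noteq> 0} \<union> {i\<in>I. w' i \<noteq> 0}"
  have f: "finite ?J" and JI: "?J \<subseteq> I" using assms by (auto simp: compP_def)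
  have s1: "sum w ?J = u"
  proof -
    have "(\<Sum>i\<in>{i\<in>I. w i \<noteq> 0}. w i) = sum w ?J" by (rule sum.mono_neutral_left[OF f]) auto
    thus ?thesis using assms(1) unfolding compP_def by simp
  qed
  have s2: "sum w' ?J = u"
  proof -
    have "(\<Sum>i\<in>{i\<in>I. w' i \<noteq> 0}. w' i) = sum w' ?J" by (rule sum.mono_neutral_left[OF f]) auto
    thus ?thesis using assms(2) unfolding compP_def by simp
  qed
  have d0: "sum (\<lambda>i. w i - w' i) ?J = 0" using s1 s2 by (simp add: sum_subtractf)
  have dW: "\<forall>i\<in>?J. w i - w' i \<in> W i" using assms W_diff unfolding compP_def by auto
  have z: "\<forall>j\<in>?J. w j - w' j = 0"
  proof
    fix j assume j: "j \<in> ?J"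
    show "w j - w' j = 0" using directD[OF f JI dW d0 j] by simp
  qed
  show "w i = w' i"
  proof (cases "i \<in> ?J")
    case True then show ?thesis using bspec[OF z True] by simp
  next
    case False
    have a1: "\<forall>i. i \<notin> I \<longrightarrow> w i = 0" "\<forall>i. i \<notin> I \<longrightarrow> w' i = 0"
      using conjunct1[OF conjunct2[OF assms(1)[unfolded compP_def]]]
        conjunct1[OF conjunct2[OF assms(2)[unfolded compP_def]]] by auto
    show ?thesis using False a1 by (cases "i \<in> I") auto
  qed
qed

lemma component_eq:
  assumes c: "c \<in> fin_fam F BB" and i: "i \<in> I"
  shows "component I W (coords_inv sc c) i = coords_inv sc (restr c (B i))"
proof -
  define w0 where "w0 j = (if j \<in> I then coords_inv sc (restr c (B j)) else 0)" for j
  let ?K = "idx ` {b. c b \<noteq> 0}"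
  have K: "finite ?K" "?K \<subseteq> I" using idx_img[OF c] by auto
  have sub: "{j\<in>I. w0 j \<noteq> 0} \<subseteq> ?K"
  proof
    fix j assume j: "j \<in> {j\<in>I. w0 j \<noteq> 0}"
    hence "restr c (B j) \<noteq> (\<lambda>_. 0)" using ci_zero by (auto simp: w0_def)
    thus "j \<in> ?K" using supp_idx[OF c] j by auto
  qed
  have "(\<Sum>j\<in>{j\<in>I. w0 j \<noteq> 0}. w0 j) = (\<Sum>j\<in>?K. w0 j)"
    by (rule sum.mono_neutral_left[OF K(1) sub]) (use K(2) in auto)
  also have "\<dots> = (\<Sum>j\<in>?K. coords_inv sc (restr c (B j)))"
    using K(2) by (auto simp: w0_def intro!: sum.cong)
  also have "\<dots> = coords_inv sc c" using decomp[OF c] by simp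
  finally have "compP (coords_inv sc c) w0"
    unfolding compP_def using ci_restr_W[OF c] finite_subset[OF sub K(1)]
    by (auto simp: w0_def)
  hence "component I W (coords_inv sc c) = w0"
    unfolding component_def compP_def[symmetric]
    using compP_unique by (intro the_equality) auto
  thus ?thesis using i by (simp add: w0_def)
qed

end



locale setting2 = setting F sc I W B
  for F :: "complex set"
    and sc :: "complex \<Rightarrow> 'v::ab_group_add \<Rightarrow> 'v"
    and I :: "'i set"
    and W B :: "'i \<Rightarrow> 'v set" +
  fixes \<phi> lam :: "complex \<Rightarrow> complex"
    and \<rho> :: "'v \<Rightarrow> complex \<Rightarrow> complex"
    and ip :: "'i \<Rightarrow> ('v \<Rightarrow> complex) \<Rightarrow> ('v \<Rightarrow> complex) \<Rightarrow> complex"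
  assumes phi: "mult_aut F \<phi>"
    and lam: "mult_aut F lam"
    and rho0: "\<forall>b\<in>(\<Union>i\<in>I. B i). mult_aut F (\<rho> b)"
    and ips: "\<forall>i\<in>I. is_inner_product F (lam \<circ> inv_into F \<phi>) (fin_fam F (B i))
                       fam_add fam_smul (\<lambda>_. 0) (ip i)"
begin

lemma rho: "b \<in> BB \<Longrightarrow> mult_aut F (\<rho> b)" using rho0 unfolding BB_def by blast

definition "g b x = \<phi> (inv_into F (\<rho> b) x)"
definition "cd u = coords F sc BB u"
definition "sg i u = (\<lambda>b. if b \<in> B i then g b (cd u b) else 0)"
definition "kap = lam \<circ> inv_into F \<phi>"
definition "tt u v i = inv_into F \<phi> (ip i (sg i u) (sg i v))"

lemma kap_bij: "bij_betw kap F F"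
  unfolding kap_def using bij_betw_trans[OF bij_betw_inv_into[OF ma_bij[OF phi]] ma_bij[OF lam]] .

lemma kap0: "kap 0 = 0"
  unfolding kap_def using ma_zero[OF FF lam] ma_inv_zero[OF FF phi] by simp

lemma kap_in: "x \<in> F \<Longrightarrow> kap x \<in> F" using kap_bij by (meson bij_betw_apply)
lemma kap_inv_in: "x \<in> F \<Longrightarrow> inv_into F kap x \<in> F" using kap_bij by (meson bij_betw_apply bij_betw_inv_into)
lemma kap_inv_f: "x \<in> F \<Longrightarrow> inv_into F kap (kap x) = x" using kap_bij by (meson bij_betw_inv_into_left)
lemma kap_f_inv: "x \<in> F \<Longrightarrow> kap (inv_into F kap x) = x" using kap_bij by (meson bij_betw_inv_into_right)
lemma kap_inv0: "inv_into F kap 0 = 0" using kap_inv_f[of 0] kap0 Fp by simp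

lemma g_in: "b \<in> BB \<Longrightarrow> x \<in> F \<Longrightarrow> g b x \<in> F"
  unfolding g_def using rho ma_in[OF phi] ma_inv_in by blast
lemma g0: "b \<in> BB \<Longrightarrow> g b 0 = 0"
  unfolding g_def using rho ma_inv_zero[OF FF] ma_zero[OF FF phi] by simp
lemma g_eq0: "b \<in> BB \<Longrightarrow> x \<in> F \<Longrightarrow> g b x = 0 \<longleftrightarrow> x = 0"
  unfolding g_def using rho ma_eq0[OF FF phi] ma_eq0[OF FF] ma_inv_in ma_f_inv
  by (metis ma_inv_zero[OF FF])
lemma g_rho: "b \<in> BB \<Longrightarrow> y \<in> F \<Longrightarrow> g b (\<rho> b (inv_into F \<phi> y)) = y"
  unfolding g_def using rho ma_inv_f ma_f_inv[OF phi] ma_inv_in[OF phi] by metis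
lemma g_smul: "b \<in> BB \<Longrightarrow> a \<in> F \<Longrightarrow> x \<in> F \<Longrightarrow> g b (\<rho> b a * x) = \<phi> a * g b x"
proof -
  assume b: "b \<in> BB" and a: "a \<in> F" and x: "x \<in> F"
  have r: "mult_aut F (\<rho> b)" using rho b .
  have "inv_into F (\<rho> b) (\<rho> b a * x) = inv_into F (\<rho> b) (\<rho> b a) * inv_into F (\<rho> b) x"
    using ma_inv_mult[OF r _ x FF] ma_in[OF r a] by simp
  also have "\<dots> = a * inv_into F (\<rho> b) x" using ma_inv_f[OF r a] by simp
  finally show ?thesis unfolding g_def using ma_mult[OF phi a ma_inv_in[OF r x]] by simp
qed

lemma cd_X: "u \<in> X \<Longrightarrow> cd u \<in> fin_fam F BB" "u \<in> X \<Longrightarrow> coords_inv sc (cd u) = u"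
  unfolding cd_def by (erule coords_X(1), erule coords_X(2))

lemma cd_ci: "c \<in> fin_fam F BB \<Longrightarrow> cd (coords_inv sc c) = c"
  unfolding cd_def using coords_of_inv[OF indep_BB] by simp

lemma zero_fam: "(\<lambda>_. 0) \<in> fin_fam F S" using Fp by (simp add: fin_fam_iff)

lemma zero_X: "0 \<in> X" using ci_in_X[OF zero_fam] ci_zero by simp
lemma cd_zero: "cd 0 = (\<lambda>_. 0)" using cd_ci[OF zero_fam] ci_zero by simp

lemma cdF: "u \<in> X \<Longrightarrow> cd u b \<in> F" using cd_X(1) unfolding fin_fam_iff by blast

lemma sigma_eq:
  assumes u: "u \<in> X" and i: "i \<in> I"
  shows "sigma_tilde F sc (B i) \<phi> \<rho> (component I W u i) = sg i u"
proof -
  have "component I W u i = coords_inv sc (restr (cd u) (B i))"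
    using component_eq[OF cd_X(1)[OF u] i] cd_X(2)[OF u] by simp
  hence co: "coords F sc (B i) (component I W u i) = restr (cd u) (B i)"
    using coords_of_inv[OF indep_B[OF i] restr_in[OF cd_X(1)[OF u]]] by simp
  show ?thesis
  proof (rule ext)
    fix b show "sigma_tilde F sc (B i) \<phi> \<rho> (component I W u i) b = sg i u b"
      unfolding sigma_tilde_def sg_def g_def co restr_def by simp
  qed
qed

lemma B_BB: "i \<in> I \<Longrightarrow> b \<in> B i \<Longrightarrow> b \<in> BB" by (auto simp: BB_def)

lemma sg_fin: assumes u: "u \<in> X" and i: "i \<in> I" shows "sg i u \<in> fin_fam F (B i)"
proof -
  have sub: "{b. sg i u b \<noteq> 0} \<subseteq> {b. cd u b \<noteq> 0}"
  proof
    fix b assume "b \<in> {b. sg i u b \<noteq> 0}"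
    then show "b \<in> {b. cd u b \<noteq> 0}" using g0 B_BB[OF i] unfolding sg_def
      by (cases "b \<in> B i") auto
  qed
  have fin: "finite {b. cd u b \<noteq> 0}" using cd_X(1)[OF u] by (simp add: fin_fam_iff)
  have "finite {b. sg i u b \<noteq> 0}" by (rule finite_subset[OF sub fin])
  moreover have "\<forall>b. sg i u b \<in> F" using g_in[OF B_BB[OF i]] cdF[OF u] Fp by (simp add: sg_def)
  moreover have "\<forall>b. b \<notin> B i \<longrightarrow> sg i u b = 0" by (simp add: sg_def)
  ultimately show ?thesis unfolding fin_fam_iff by blast
qed

definition "Ks u = {i\<in>I. sg i u \<noteq> (\<lambda>_. 0)}"

lemma Ks_fin: assumes u: "u \<in> X" shows "finite (Ks u)"
proof -
  have "Ks u \<subseteq> idx ` {b. cd u b \<noteq> 0}"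
  proof
    fix i assume "i \<in> Ks u"
    then have iI: "i \<in> I" and "sg i u \<noteq> (\<lambda>_. 0)" by (auto simp: Ks_def)
    then obtain b where "sg i u b \<noteq> 0" by (meson ext)
    then have b: "i \<in> I" "b \<in> B i" "g b (cd u b) \<noteq> 0" using iI unfolding sg_def by (auto split: if_splits)
    hence "cd u b \<noteq> 0" using g0 B_BB by metis
    thus "i \<in> idx ` {b. cd u b \<noteq> 0}" using idx_eq b by force
  qed
  moreover have "finite {b. cd u b \<noteq> 0}" using cd_X(1)[OF u] by (simp add: fin_fam_iff)
  ultimately show ?thesis using finite_subset finite_imageI by blast
qed

lemma Ks_sub: "Ks u \<subseteq> I" by (auto simp: Ks_def)

end



lemma nonneg_sum: "\<forall>i\<in>K. f i \<in> nonneg_ray \<Longrightarrow> sum f K \<in> nonneg_ray"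
proof (induction K rule: infinite_finite_induct)
  case (insert x K)
  then show ?case unfolding nonneg_ray_def by (auto simp: Reals_add)
qed (auto simp: nonneg_ray_def)

context setting2 begin

lemma ipD:
  assumes i: "i \<in> I"
  shows "\<And>x y. x \<in> fin_fam F (B i) \<Longrightarrow> y \<in> fin_fam F (B i) \<Longrightarrow> ip i x y \<in> F"
    and "\<And>x y. x \<in> fin_fam F (B i) \<Longrightarrow> y \<in> fin_fam F (B i) \<Longrightarrow> ip i x y = inv_into F kap (cnj (kap (ip i y x)))"
    and "\<And>a x y. a \<in> F \<Longrightarrow> x \<in> fin_fam F (B i) \<Longrightarrow> y \<in> fin_fam F (B i) \<Longrightarrow> ip i (fam_smul a x) y = a * ip i x y"
    and "\<And>x y z. x \<in> fin_fam F (B i) \<Longrightarrow> y \<in> fin_fam F (B i) \<Longrightarrow> z \<in> fin_fam F (B i) \<Longrightarrow>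
          ip i (fam_add x y) z = inv_into F kap (kap (ip i x z) + kap (ip i y z))"
    and "\<And>x. x \<in> fin_fam F (B i) \<Longrightarrow> x \<noteq> (\<lambda>_. 0) \<Longrightarrow> kap (ip i x x) \<in> nonneg_ray"
    and "\<And>x. x \<in> fin_fam F (B i) \<Longrightarrow> ip i x x = 0 \<longleftrightarrow> x = (\<lambda>_. 0)"
proof -
  have ii: "is_inner_product F kap (fin_fam F (B i)) fam_add fam_smul (\<lambda>_. 0) (ip i)"
    unfolding kap_def using ips i by blast
  note c = ii[unfolded is_inner_product_def]
  note c1 = conjunct1[OF c] and c2 = conjunct1[OF conjunct2[OF c]]
    and c3 = conjunct1[OF conjunct2[OF conjunct2[OF c]]]
    and c4 = conjunct1[OF conjunct2[OF conjunct2[OF conjunct2[OF c]]]]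
    and c5 = conjunct1[OF conjunct2[OF conjunct2[OF conjunct2[OF conjunct2[OF c]]]]]
    and c6 = conjunct2[OF conjunct2[OF conjunct2[OF conjunct2[OF conjunct2[OF c]]]]]
  show "\<And>x y. x \<in> fin_fam F (B i) \<Longrightarrow> y \<in> fin_fam F (B i) \<Longrightarrow> ip i x y \<in> F"
    using c1 by blast
  show "\<And>x y. x \<in> fin_fam F (B i) \<Longrightarrow> y \<in> fin_fam F (B i) \<Longrightarrow> ip i x y = inv_into F kap (cnj (kap (ip i y x)))"
    using c2 by blast
  show "\<And>a x y. a \<in> F \<Longrightarrow> x \<in> fin_fam F (B i) \<Longrightarrow> y \<in> fin_fam F (B i) \<Longrightarrow> ip i (fam_smul a x) y = a * ip i x y"
    using c3 by blast
  show "\<And>x y z. x \<in> fin_fam F (B i) \<Longrightarrow> y \<in> fin_fam F (B i) \<Longrightarrow> z \<in> fin_fam F (B i) \<Longrightarrow>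
          ip i (fam_add x y) z = inv_into F kap (kap (ip i x z) + kap (ip i y z))"
    using c4 by blast
  show "\<And>x. x \<in> fin_fam F (B i) \<Longrightarrow> x \<noteq> (\<lambda>_. 0) \<Longrightarrow> kap (ip i x x) \<in> nonneg_ray"
    using c5 by blast
  show "\<And>x. x \<in> fin_fam F (B i) \<Longrightarrow> ip i x x = 0 \<longleftrightarrow> x = (\<lambda>_. 0)"
    using c6 by blast
qed

lemma ip_0l: "i \<in> I \<Longrightarrow> y \<in> fin_fam F (B i) \<Longrightarrow> ip i (\<lambda>_. 0) y = 0"
proof -
  assume i: "i \<in> I" and y: "y \<in> fin_fam F (B i)"
  have "ip i (fam_smul 0 (\<lambda>_. 0)) y = 0 * ip i (\<lambda>_. 0) y"
    by (rule ipD(3)[OF i Fp(1) zero_fam y])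
  moreover have "ip i (\<lambda>_. 0) y = ip i (fam_smul 0 (\<lambda>_. 0)) y" by (simp add: fam_smul_def)
  ultimately show ?thesis by simp
qed

lemma ip_0r: "i \<in> I \<Longrightarrow> x \<in> fin_fam F (B i) \<Longrightarrow> ip i x (\<lambda>_. 0) = 0"
proof -
  assume i: "i \<in> I" and x: "x \<in> fin_fam F (B i)"
  have "ip i x (\<lambda>_. 0) = inv_into F kap (cnj (kap (ip i (\<lambda>_. 0) x)))"
    by (rule ipD(2)[OF i x zero_fam])
  also have "ip i (\<lambda>_. 0) x = 0" by (rule ip_0l[OF i x])
  finally show ?thesis using kap0 kap_inv0 by simp
qed

lemma kap_eq0: "x \<in> F \<Longrightarrow> kap x = 0 \<longleftrightarrow> x = 0"
  using kap_inv_f kap0 kap_inv0 by metis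

lemma lam0: "lam 0 = 0" using ma_zero[OF FF lam] .

lemma tt_in: "u \<in> X \<Longrightarrow> v \<in> X \<Longrightarrow> i \<in> I \<Longrightarrow> tt u v i \<in> F"
  unfolding tt_def using ma_inv_in[OF phi] ipD(1) sg_fin by blast

lemma lam_tt: "lam (tt u v i) = kap (ip i (sg i u) (sg i v))"
  unfolding tt_def kap_def by simp

lemma tt_supp: assumes "u \<in> X" "v \<in> X" "i \<in> I" "tt u v i \<noteq> 0"
  shows "i \<in> Ks u" "i \<in> Ks v"
  using assms ip_0l ip_0r sg_fin ma_inv_zero[OF FF phi] unfolding Ks_def tt_def by auto

lemma ipI_eq:
  assumes u: "u \<in> X" and v: "v \<in> X" and K: "finite K" "K \<subseteq> I" "Ks v \<subseteq> K"
  shows "ip_I F sc I W B \<phi> lam \<rho> ip u v = inv_into F lam (\<Sum>i\<in>K. lam (tt u v i))"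
proof -
  have eqI: "\<forall>i\<in>I. inv_into F \<phi> (ip i (sigma_tilde F sc (B i) \<phi> \<rho> (component I W u i))
        (sigma_tilde F sc (B i) \<phi> \<rho> (component I W v i))) = tt u v i"
    using sigma_eq u v by (simp add: tt_def)
  have "ip_I F sc I W B \<phi> lam \<rho> ip u v = inv_into F lam (\<Sum>i\<in>{i\<in>I. tt u v i \<noteq> 0}. lam (tt u v i))"
    unfolding ip_I_def lambda_sum_def
    by (rule arg_cong[where f="inv_into F lam"]) (rule sum.cong, use eqI in auto)
  also have "(\<Sum>i\<in>{i\<in>I. tt u v i \<noteq> 0}. lam (tt u v i)) = (\<Sum>i\<in>K. lam (tt u v i))"
    by (rule sum.mono_neutral_left[OF K(1)]) (use K tt_supp[OF u v] lam0 in auto)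
  finally show ?thesis .
qed

lemma eta_add_props:
  assumes u: "u \<in> X" and v: "v \<in> X"
  shows "eta_add F sc BB \<phi> \<rho> u v \<in> X"
    "\<And>i. i \<in> I \<Longrightarrow> sg i (eta_add F sc BB \<phi> \<rho> u v) = fam_add (sg i u) (sg i v)"
proof -
  define c where "c b = (if b \<in> BB then \<rho> b (inv_into F \<phi> (g b (cd u b) + g b (cd v b))) else 0)" for b
  have e: "eta_add F sc BB \<phi> \<rho> u v = coords_inv sc c"
    unfolding eta_add_def c_def g_def cd_def ..
  have cF: "\<forall>b. c b \<in> F"
    using Fp ma_in[OF rho] ma_inv_in[OF phi] g_in cdF[OF u] cdF[OF v] by (simp add: c_def)
  have "{b. c b \<noteq> 0} \<subseteq> {b. cd u b \<noteq> 0} \<union> {b. cd v b \<noteq> 0}"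
    using g0 ma_inv_zero[OF FF phi] ma_zero[OF FF rho] by (auto simp: c_def)
  moreover have "finite ({b. cd u b \<noteq> 0} \<union> {b. cd v b \<noteq> 0})"
    using cd_X(1)[OF u] cd_X(1)[OF v] by (simp add: fin_fam_iff)
  ultimately have fin: "finite {b. c b \<noteq> 0}" by (rule finite_subset)
  have out: "\<forall>b. b \<notin> BB \<longrightarrow> c b = 0" by (simp add: c_def)
  have c: "c \<in> fin_fam F BB" unfolding fin_fam_iff using cF fin out by blast
  show "eta_add F sc BB \<phi> \<rho> u v \<in> X" using e ci_in_X[OF c] by simp
  fix i assume i: "i \<in> I"
  show "sg i (eta_add F sc BB \<phi> \<rho> u v) = fam_add (sg i u) (sg i v)"
    unfolding e cd_ci[OF c] sg_def fam_add_def cd_ci[OF c]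
    using B_BB[OF i] g_rho g_in cdF[OF u] cdF[OF v] Fp by (auto simp: c_def cd_ci[OF c] sg_def)
qed

lemma eta_smul_props:
  assumes u: "u \<in> X" and a: "a \<in> F"
  shows "eta_smul F sc BB \<rho> a u \<in> X"
    "\<And>i. i \<in> I \<Longrightarrow> sg i (eta_smul F sc BB \<rho> a u) = fam_smul (\<phi> a) (sg i u)"
proof -
  define c where "c b = (if b \<in> BB then \<rho> b a * cd u b else 0)" for b
  have e: "eta_smul F sc BB \<rho> a u = coords_inv sc c"
    unfolding eta_smul_def c_def cd_def ..
  have cF: "\<forall>b. c b \<in> F"
    using Fp ma_in[OF rho] a cdF[OF u] by (simp add: c_def)
  have "{b. c b \<noteq> 0} \<subseteq> {b. cd u b \<noteq> 0}" by (auto simp: c_def)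
  moreover have "finite {b. cd u b \<noteq> 0}"
    using cd_X(1)[OF u] by (simp add: fin_fam_iff)
  ultimately have fin: "finite {b. c b \<noteq> 0}" by (rule finite_subset)
  have out: "\<forall>b. b \<notin> BB \<longrightarrow> c b = 0" by (simp add: c_def)
  have c: "c \<in> fin_fam F BB" unfolding fin_fam_iff using cF fin out by blast
  show "eta_smul F sc BB \<rho> a u \<in> X" using e ci_in_X[OF c] by simp
  fix i assume i: "i \<in> I"
  show "sg i (eta_smul F sc BB \<rho> a u) = fam_smul (\<phi> a) (sg i u)"
    unfolding e cd_ci[OF c] sg_def fam_smul_def
    using B_BB[OF i] g_smul a cdF[OF u] by (auto simp: c_def)
qed

end



lemma ray_pos: "z \<in> nonneg_ray \<Longrightarrow> z \<noteq> 0 \<Longrightarrow> Re z > 0"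
  unfolding nonneg_ray_def by (auto simp: complex_is_Real_iff complex_eq_iff)

context setting2 begin

definition "SS u v = (\<Sum>i\<in>Ks v. lam (tt u v i))"

lemma lam_tt_in: "u \<in> X \<Longrightarrow> v \<in> X \<Longrightarrow> i \<in> I \<Longrightarrow> lam (tt u v i) \<in> F"
  using ma_in[OF lam] tt_in by blast

lemma SS_in: "u \<in> X \<Longrightarrow> v \<in> X \<Longrightarrow> SS u v \<in> F"
  unfolding SS_def using lam_tt_in Ks_sub by (intro Fset_sum[OF FF]) blast

lemma P_eq: "u \<in> X \<Longrightarrow> v \<in> X \<Longrightarrow> ip_I F sc I W B \<phi> lam \<rho> ip u v = inv_into F lam (SS u v)"
  unfolding SS_def using ipI_eq Ks_fin Ks_sub by blast

lemma lam_P: "u \<in> X \<Longrightarrow> v \<in> X \<Longrightarrow> lam (ip_I F sc I W B \<phi> lam \<rho> ip u v) = SS u v"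
  using P_eq SS_in ma_f_inv[OF lam] by simp

lemma main:
  "is_inner_product F lam X (eta_add F sc BB \<phi> \<rho>) (eta_smul F sc BB \<rho>) 0 (ip_I F sc I W B \<phi> lam \<rho> ip)"
  unfolding is_inner_product_def
proof (intro conjI ballI impI)
  let ?P = "ip_I F sc I W B \<phi> lam \<rho> ip"
  fix u v assume u: "u \<in> X" and v: "v \<in> X"
  show "?P u v \<in> F" using P_eq[OF u v] SS_in[OF u v] ma_inv_in[OF lam] by simp
  let ?K = "Ks u \<union> Ks v"
  have K: "finite ?K" "?K \<subseteq> I" using Ks_fin[OF u] Ks_fin[OF v] Ks_sub by auto
  have sin: "(\<Sum>i\<in>?K. lam (tt v u i)) \<in> F"
    by (rule Fset_sum[OF FF]) (use lam_tt_in[OF v u] K(2) in blast)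
  have "lam (?P v u) = (\<Sum>i\<in>?K. lam (tt v u i))"
    using ipI_eq[OF v u K(1) K(2) Un_upper1] ma_f_inv[OF lam sin] by simp
  hence "cnj (lam (?P v u)) = cnj (\<Sum>i\<in>?K. lam (tt v u i))" by simp
  also have "\<dots> = (\<Sum>i\<in>?K. lam (tt u v i))"
  proof -
    have "\<forall>i\<in>?K. cnj (lam (tt v u i)) = lam (tt u v i)"
    proof
      fix i assume "i \<in> ?K"
      hence i: "i \<in> I" using K by auto
      have x: "sg i u \<in> fin_fam F (B i)" "sg i v \<in> fin_fam F (B i)" using sg_fin u v i by auto
      have "kap (ip i (sg i u) (sg i v)) = cnj (kap (ip i (sg i v) (sg i u)))"
        using ipD(2)[OF i x] kap_f_inv Fp kap_in ipD(1)[OF i x(2) x(1)] by metis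
      thus "cnj (lam (tt v u i)) = lam (tt u v i)" by (simp add: lam_tt)
    qed
    thus ?thesis by simp
  qed
  finally show "?P u v = inv_into F lam (cnj (lam (?P v u)))"
    using ipI_eq[OF u v K(1) K(2) Un_upper2] by simp
next
  let ?P = "ip_I F sc I W B \<phi> lam \<rho> ip"
  fix a u v assume a: "a \<in> F" and u: "u \<in> X" and v: "v \<in> X"
  have au: "eta_smul F sc BB \<rho> a u \<in> X" using eta_smul_props(1)[OF u a] .
  have tt: "tt (eta_smul F sc BB \<rho> a u) v i = a * tt u v i" if i: "i \<in> I" for i
  proof -
    have x: "sg i u \<in> fin_fam F (B i)" "sg i v \<in> fin_fam F (B i)" using sg_fin u v i by auto
    have "ip i (sg i (eta_smul F sc BB \<rho> a u)) (sg i v) = \<phi> a * ip i (sg i u) (sg i v)"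
      using eta_smul_props(2)[OF u a i] ipD(3)[OF i ma_in[OF phi a] x] by simp
    thus ?thesis unfolding tt_def
      using ma_inv_mult[OF phi ma_in[OF phi a] ipD(1)[OF i x] FF] ma_inv_f[OF phi a] by simp
  qed
  have "?P (eta_smul F sc BB \<rho> a u) v = inv_into F lam (\<Sum>i\<in>Ks v. lam (tt (eta_smul F sc BB \<rho> a u) v i))"
    using ipI_eq[OF au v Ks_fin[OF v] Ks_sub] by simp
  also have "(\<Sum>i\<in>Ks v. lam (tt (eta_smul F sc BB \<rho> a u) v i)) = lam a * SS u v"
    unfolding SS_def sum_distrib_left
  proof (rule sum.cong[OF refl])
    fix i assume "i \<in> Ks v"
    hence i: "i \<in> I" using Ks_sub by blast
    show "lam (tt (eta_smul F sc BB \<rho> a u) v i) = lam a * lam (tt u v i)"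
      using tt[OF i] ma_mult[OF lam a tt_in[OF u v i]] by simp
  qed
  also have "inv_into F lam (lam a * SS u v) = a * inv_into F lam (SS u v)"
    using ma_inv_mult[OF lam ma_in[OF lam a] SS_in[OF u v] FF] ma_inv_f[OF lam a] by simp
  finally show "?P (eta_smul F sc BB \<rho> a u) v = a * ?P u v" using P_eq[OF u v] by simp
next
  let ?P = "ip_I F sc I W B \<phi> lam \<rho> ip"
  fix u v w assume u: "u \<in> X" and v: "v \<in> X" and w: "w \<in> X"
  let ?s = "eta_add F sc BB \<phi> \<rho> u v"
  have s: "?s \<in> X" using eta_add_props(1)[OF u v] .
  have lt: "lam (tt ?s w i) = lam (tt u w i) + lam (tt v w i)" if i: "i \<in> I" for i
  proof -
    have x: "sg i u \<in> fin_fam F (B i)" "sg i v \<in> fin_fam F (B i)" "sg i w \<in> fin_fam F (B i)"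
      using sg_fin u v w i by auto
    have "kap (ip i (sg i ?s) (sg i w)) = kap (ip i (sg i u) (sg i w)) + kap (ip i (sg i v) (sg i w))"
      using eta_add_props(2)[OF u v i] ipD(4)[OF i x] kap_f_inv Fp kap_in ipD(1)[OF i] x by simp
    thus ?thesis by (simp add: lam_tt)
  qed
  have "?P ?s w = inv_into F lam (\<Sum>i\<in>Ks w. lam (tt ?s w i))"
    using ipI_eq[OF s w Ks_fin[OF w] Ks_sub] by simp
  also have "(\<Sum>i\<in>Ks w. lam (tt ?s w i)) = SS u w + SS v w"
    unfolding SS_def sum.distrib[symmetric]
  proof (rule sum.cong[OF refl])
    fix i assume "i \<in> Ks w"
    hence i: "i \<in> I" using Ks_sub by blast
    show "lam (tt ?s w i) = lam (tt u w i) + lam (tt v w i)" using lt[OF i] .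
  qed
  finally show "?P ?s w = inv_into F lam (lam (?P u w) + lam (?P v w))"
    using lam_P[OF u w] lam_P[OF v w] by simp
next
  let ?P = "ip_I F sc I W B \<phi> lam \<rho> ip"
  fix u assume u: "u \<in> X"
  have pos: "lam (tt u u i) \<in> nonneg_ray" if i: "i \<in> Ks u" for i
  proof -
    have iI: "i \<in> I" and ne: "sg i u \<noteq> (\<lambda>_. 0)" using i by (auto simp: Ks_def)
    show ?thesis using ipD(5)[OF iI sg_fin[OF u iI] ne] by (simp add: lam_tt)
  qed
  have SSn: "SS u u \<in> nonneg_ray" unfolding SS_def
    by (rule nonneg_sum) (use pos in blast)
  have PF: "?P u u \<in> F" using P_eq[OF u u] SS_in[OF u u] ma_inv_in[OF lam] by simp
  have "lam (?P u u) \<in> nonneg_ray" using lam_P[OF u u] SSn by simp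
  with PF show "?P u u \<in> {x \<in> F. lam x \<in> nonneg_ray}" by blast
  show "(?P u u = 0) = (u = 0)"
  proof
    assume "u = 0"
    hence "Ks u = {}" using cd_zero g0 B_BB by (auto simp: Ks_def sg_def fun_eq_iff)
    thus "?P u u = 0" using P_eq[OF u u] ma_inv_zero[OF FF lam] by (simp add: SS_def)
  next
    assume P0: "?P u u = 0"
    show "u = 0"
    proof (rule ccontr)
      assume "u \<noteq> 0"
      hence "cd u \<noteq> (\<lambda>_. 0)" using cd_X(2)[OF u] ci_zero by auto
      then obtain b where b: "cd u b \<noteq> 0" by auto
      hence bB: "b \<in> BB" using cd_X(1)[OF u] by (auto simp: fin_fam_iff)
      define i where "i = idx b"
      have i: "i \<in> I" "b \<in> B i" using idx[OF bB] by (auto simp: i_def)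
      have "sg i u b \<noteq> 0" using i b g_eq0[OF bB] cdF[OF u] by (simp add: sg_def)
      hence iK: "i \<in> Ks u" using i by (auto simp: Ks_def)
      hence ne: "sg i u \<noteq> (\<lambda>_. 0)" by (simp add: Ks_def)
      have "ip i (sg i u) (sg i u) \<noteq> 0" using ipD(6)[OF i(1) sg_fin[OF u i(1)]] ne by simp
      hence "lam (tt u u i) \<noteq> 0"
        using kap_eq0 ipD(1)[OF i(1) sg_fin[OF u i(1)] sg_fin[OF u i(1)]] by (simp add: lam_tt)
      hence "Re (lam (tt u u i)) > 0" using pos[OF iK]
        using ray_pos by blast
      moreover have "Re (lam (tt u u i)) \<le> Re (SS u u)"
        unfolding SS_def Re_sum
        by (rule member_le_sum[OF iK]) (use pos Ks_fin[OF u] in \<open>auto simp: nonneg_ray_def\<close>)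
      ultimately have "SS u u \<noteq> 0" by auto
      thus False using lam_P[OF u u] P0 lam0 by simp
    qed
  qed
qed

end


theorem mainTheorem4:
  fixes F :: "complex set"
    and sc :: "complex \<Rightarrow> 'v::ab_group_add \<Rightarrow> 'v"
    and I :: "'i set"
    and W B :: "'i \<Rightarrow> 'v set"
    and \<phi> lam :: "complex \<Rightarrow> complex"
    and \<rho> :: "'v \<Rightarrow> complex \<Rightarrow> complex"
    and ip :: "'i \<Rightarrow> ('v \<Rightarrow> complex) \<Rightarrow> ('v \<Rightarrow> complex) \<Rightarrow> complex"
  assumes F: "F = \<real> \<or> F = UNIV"
    and V: "f_vector_space F sc"
    and Wsub: "\<forall>i\<in>I. f_subspace F sc (W i)"
    and direct: "independent_family I W"
    and basis: "\<forall>i\<in>I. f_basis F sc (W i) (B i)"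
    and phi: "mult_aut F \<phi>" "commutes_cnj F \<phi>" "order_pres_nonneg \<phi>"
    and lam: "mult_aut F lam" "commutes_cnj F lam" "order_pres_nonneg lam"
    and rho: "\<forall>b\<in>(\<Union>i\<in>I. B i). mult_aut F (\<rho> b)"
    and ips: "\<forall>i\<in>I. is_inner_product F (lam \<circ> inv_into F \<phi>) (fin_fam F (B i))
                       fam_add fam_smul (\<lambda>_. 0) (ip i)"
  shows "is_inner_product F lam (sum_of_family I W)
           (eta_add F sc (\<Union>i\<in>I. B i) \<phi> \<rho>) (eta_smul F sc (\<Union>i\<in>I. B i) \<rho>) 0
           (ip_I F sc I W B \<phi> lam \<rho> ip)"
  proof -
  have FF: "Fset F" using F by (simp add: Fset_def)
  have loc: "setting2 F sc I W B \<phi> lam \<rho> ip"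
    unfolding setting2_def setting_def setting2_axioms_def
    using FF V Wsub direct basis phi(1) lam(1) rho ips by blast
  show ?thesis
    using setting2.main[OF loc]
    unfolding setting.X_def[OF setting2.axioms(1)[OF loc]] setting.BB_def[OF setting2.axioms(1)[OF loc]] .
qed

end
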